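(* For every $m\ge 1$ we have \[ \tau_a(D_{0,m}) \equiv \sum_{k=1}^m \binom{m-1}{k-1} a^{m-k} D_{0,k} \] modulo a central element of $Y(\widehat{\mathfrak{gl}}(1))$.
   Context: Let $\hbar,\mathbf t$ be indeterminates. Set $G_0(x)=-\log x$, $G_n(x)=\frac{x^{-n}-1}{n}$ for $n\ge1$, and $\varphi_n(x)=\sum_{q\in\{-\hbar,\ \hbar+\mathbf t,\ -\mathbf t\}} x^n\big(G_n(1-qx)-G_n(1+qx)\big)$. The affine Yangian $Y(\widehat{\mathfrak{gl}}(1))$ is the $\mathbb C[\omega,\hbar,\mathbf t]$-algebra generated by $D_{0,m}$ ($m\ge1$), $e_n,f_n$ ($n\ge0$) with relations: $[D_{0,m},D_{0,n}]=0$; $[D_{0,m},e_n]=-\hbar e_{m+n-1}$; $[D_{0,m},f_n]=\hbar f_{m+n-1}$; $3[e_2,e_1]-[e_3,e_0]+(\hbar^2+\mathbf t(\hbar+\mathbf t))[e_1,e_0]+\hbar\mathbf t(\hbar+\mathbf t)e_0^2=0$; $3[f_2,f_1]-[f_3,f_0]+(\hbar^2+\mathbf t(\hbar+\mathbf t))[f_1,f_0]-\hbar\mathbf t(\hbar+\mathbf t)f_0^2=0$; $[e_0,[e_0,e_1]]=0=[f_0,[f_0,f_1]]$; $[e_m,f_n]=\hbar h_{m+n}$, where the elements $h_n$ are determined by \[ 1-\mathbf t(\hbar+\mathbf t)\sum_{n\ge0}h_nx^{n+1}=\frac{(1-(\hbar+\mathbf t)x)(1+\omega\mathbf t x)}{1-(\hbar+(1-\omega)\mathbf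 t)x}\exp\Big(-\sum_{n\ge0}\frac{D_{0,n+1}}{\hbar}\varphi_n(x)\Big). \] For a complex number $a$, $\tau_a$ is the automorphism of $Y(\widehat{\mathfrak{gl}}(1))$ defined by $\tau_a(e_n)=\sum_{k=0}^n\binom{n}{k}a^{n-k}e_k$, $\tau_a(f_n)=\sum_{k=0}^n\binom{n}{k}a^{n-k}f_k$, $\tau_a(h_n)=\sum_{k=0}^n\binom{n}{k}a^{n-k}h_k$. *)

theory Defs
  imports Complex_Main "HOL-Library.Poly_Mapping"
    "HOL-Computational_Algebra.Formal_Power_Series"
begin

type_synonym R = "(nat \<Rightarrow>\<^sub>0 nat) \<Rightarrow>\<^sub>0 complex"

definition rconst :: "complex \<Rightarrow> R" where
  "rconst c = Poly_Mapping.single 0 c"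

definition rvar :: "nat \<Rightarrow> R" where
  "rvar i = Poly_Mapping.single (Poly_Mapping.single i 1) 1"

definition om :: R where "om = rvar 0"
definition hb :: R where "hb = rvar 1"
definition tt :: R where "tt = rvar 2"

definition rdiv :: "R \<Rightarrow> R \<Rightarrow> R" where
  "rdiv p q = (THE r. r * q = p)"

text \<open>Generators: DG k stands for D_{0,k+1} (so only D_{0,m}, m >= 1, occur),
  EG n for e_n, FG n for f_n.\<close>
datatype gen = DG nat | EG nat | FG nat

datatype word = Word "gen list"

instantiation word :: monoid_add
begin
fun plus_word :: "word \<Rightarrow> word \<Rightarrow> word" where
  "plus_word (Word u) (Word v) = Word (u @ v)"
definition zero_word :: word where "zero_word = Word []"
instance
proof
  fix a b c :: word
  show "a + b + c = a + (b + c)" by (cases a; cases b; cases c) auto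
  show "0 + a = a" by (cases a) (auto simp: zero_word_def)
  show "a + 0 = a" by (cases a) (auto simp: zero_word_def)
qed
end

text \<open>Elements of the free algebra: finitely supported R-linear combinations of words,
  with multiplication induced by concatenation (noncommutative).\<close>
type_synonym FA = "word \<Rightarrow>\<^sub>0 R"

definition sc :: "R \<Rightarrow> FA" where
  "sc r = Poly_Mapping.single 0 r"

definition gn :: "gen \<Rightarrow> FA" where
  "gn g = Poly_Mapping.single (Word [g]) 1"

definition D0 :: "nat \<Rightarrow> FA" where
  "D0 m = gn (DG (m - 1))"
definition ee :: "nat \<Rightarrow> FA" where "ee n = gn (EG n)"
definition ff :: "nat \<Rightarrow> FA" where "ff n = gn (FG n)"

definition comm :: "FA \<Rightarrow> FA \<Rightarrow> FA" where
  "comm x y = x * y - y * x"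

text \<open>Coefficient of x^j in G_n(1 - u x), where G_0(y) = -log y and
  G_n(y) = (y^{-n} - 1)/n; i.e. -log(1-ux) = sum_{j>=1} u^j x^j / j and
  (1-ux)^{-n} = sum_j binom(n+j-1,j) u^j x^j.\<close>
definition gcoef :: "nat \<Rightarrow> R \<Rightarrow> nat \<Rightarrow> R" where
  "gcoef n u j =
     (if j = 0 then 0
      else if n = 0 then rconst (1 / of_nat j) * u ^ j
      else rconst (of_nat ((n + j - 1) choose j) / of_nat n) * u ^ j)"

text \<open>Coefficient of x^k in phi_n(x) = sum_q x^n (G_n(1-qx) - G_n(1+qx)),
  q ranging over -hbar, hbar+t, -t.\<close>
definition phic :: "nat \<Rightarrow> nat \<Rightarrow> R" where
  "phic n k = sum_list (map (\<lambda>q. if n \<le> k then gcoef n q (k - n) - gcoef n (- q) (k - n) else 0)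
                          [- hb, hb + tt, - tt])"

text \<open>The series S(x) = - sum_{n>=0} (D_{0,n+1}/hbar) phi_n(x) (phi_n(x) = O(x^{n+1})).\<close>
definition Sser :: "FA fps" where
  "Sser = Abs_fps (\<lambda>k. - (\<Sum>n\<le>k. sc (rdiv (phic n k) hb) * D0 (n + 1)))"

text \<open>Coefficients of exp(S(x)) = sum_j S(x)^j / j!.\<close>
definition Ec :: "nat \<Rightarrow> FA" where
  "Ec N = (\<Sum>j\<le>N. sc (rconst (1 / fact j)) * fps_nth (Sser ^ j) N)"

text \<open>Coefficients of (1-(hbar+t)x)(1+omega t x)/(1-(hbar+(1-omega)t)x).\<close>
definition numc :: "nat \<Rightarrow> R" where
  "numc i = (if i = 0 then 1 else if i = 1 then - (hb + tt) + om * tt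
             else if i = 2 then - ((hb + tt) * (om * tt)) else 0)"

definition Pc :: "nat \<Rightarrow> R" where
  "Pc i = (\<Sum>k\<le>i. numc k * (hb + (1 - om) * tt) ^ (i - k))"

definition RHSc :: "nat \<Rightarrow> FA" where
  "RHSc N = (\<Sum>i\<le>N. sc (Pc i) * Ec (N - i))"

text \<open>h_n determined by comparing coefficients of x^{n+1}:
  - t(hbar+t) h_n = [x^{n+1}] RHS.\<close>
definition hh :: "nat \<Rightarrow> FA" where
  "hh n = (THE y. sc (tt * (hb + tt)) * y = - RHSc (n + 1))"

definition rels :: "FA set" where
  "rels =
     {comm (D0 m) (D0 n) | m n. 1 \<le> m \<and> 1 \<le> n}
   \<union> {comm (D0 m) (ee n) + sc hb * ee (m + n - 1) | m n. 1 \<le> m}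
   \<union> {comm (D0 m) (ff n) - sc hb * ff (m + n - 1) | m n. 1 \<le> m}
   \<union> {sc 3 * comm (ee 2) (ee 1) - comm (ee 3) (ee 0)
        + sc (hb ^ 2 + tt * (hb + tt)) * comm (ee 1) (ee 0)
        + sc (hb * tt * (hb + tt)) * ee 0 ^ 2}
   \<union> {sc 3 * comm (ff 2) (ff 1) - comm (ff 3) (ff 0)
        + sc (hb ^ 2 + tt * (hb + tt)) * comm (ff 1) (ff 0)
        - sc (hb * tt * (hb + tt)) * ff 0 ^ 2}
   \<union> {comm (ee 0) (comm (ee 0) (ee 1)), comm (ff 0) (comm (ff 0) (ff 1))}
   \<union> {comm (ee m) (ff n) - sc hb * hh (m + n) | m n. True}"

definition two_sided_ideal :: "FA set \<Rightarrow> bool" where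
  "two_sided_ideal I \<longleftrightarrow> 0 \<in> I \<and> (\<forall>x\<in>I. \<forall>y\<in>I. x + y \<in> I) \<and> (\<forall>x\<in>I. - x \<in> I)
     \<and> (\<forall>x\<in>I. \<forall>a. a * x \<in> I \<and> x * a \<in> I)"

text \<open>Y(gl1^) = FA / Yid.\<close>
definition Yid :: "FA set" where
  "Yid = \<Inter>{I. two_sided_ideal I \<and> rels \<subseteq> I}"

definition Ycentral :: "FA \<Rightarrow> bool" where
  "Ycentral z \<longleftrightarrow> (\<forall>y. z * y - y * z \<in> Yid)"

text \<open>tau : FA -> FA is a lift of an R-algebra automorphism of Y
  (every R-algebra endomorphism of Y lifts to FA since FA is free).\<close>
definition Y_automorphism_lift :: "(FA \<Rightarrow> FA) \<Rightarrow> bool" where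
  "Y_automorphism_lift \<tau> \<longleftrightarrow>
     (\<forall>x y. \<tau> (x + y) = \<tau> x + \<tau> y) \<and> (\<forall>x y. \<tau> (x * y) = \<tau> x * \<tau> y)
     \<and> (\<forall>r. \<tau> (sc r) = sc r)
     \<and> (\<forall>x\<in>Yid. \<tau> x \<in> Yid)
     \<and> (\<forall>x. \<tau> x \<in> Yid \<longrightarrow> x \<in> Yid)
     \<and> (\<forall>y. \<exists>x. \<tau> x - y \<in> Yid)"

definition cst :: "complex \<Rightarrow> FA" where
  "cst a = sc (rconst a)"

end

theory Submission
  imports Defs
begin

lemma pm_expand: "(y::'a \<Rightarrow>\<^sub>0 'b::comm_monoid_add) = (\<Sum>w\<in>Poly_Mapping.keys y. Poly_Mapping.single w (Poly_Mapping.lookup y w))"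
  by (rule poly_mapping_eqI) (simp add: lookup_sum lookup_single when_def in_keys_iff if_distrib cong: if_cong)

lemma sc_mult: "sc a * sc b = sc (a * b)"
  by (simp add: sc_def mult_single)
lemma sc_add: "sc (a + b) = sc a + sc b"
  by (simp add: sc_def single_add)
lemma sc_diff: "sc (a - b) = sc a - sc b"
  by (simp add: sc_def single_diff)
lemma sc_uminus: "sc (- a) = - sc a"
  by (simp add: sc_def single_uminus)
lemma sc_one: "sc 1 = 1" by (simp add: sc_def)
lemma sc_zero: "sc 0 = 0" by (simp add: sc_def)
lemma sc_pow: "sc (a ^ n) = sc a ^ n"
  by (induction n) (simp_all add: sc_one sc_mult[symmetric])

lemma sc_single: "sc r * Poly_Mapping.single w s = Poly_Mapping.single w (r * s)"
  by (simp add: sc_def mult_single)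
lemma single_sc: "Poly_Mapping.single w s * sc r = Poly_Mapping.single w (s * r)"
  by (simp add: sc_def mult_single)

lemma sc_comm: "sc r * (y::FA) = y * sc r"
proof -
  have "sc r * y = sc r * (\<Sum>w\<in>Poly_Mapping.keys y. Poly_Mapping.single w (Poly_Mapping.lookup y w))"
    by (subst pm_expand[of y]) (rule refl)
  also have "\<dots> = (\<Sum>w\<in>Poly_Mapping.keys y. Poly_Mapping.single w (Poly_Mapping.lookup y w)) * sc r"
    by (simp add: sum_distrib_left sum_distrib_right sc_single single_sc mult.commute)
  also have "\<dots> = y * sc r" by (subst (2) pm_expand[of y]) (rule refl)
  finally show ?thesis .
qed

lemma lookup_sc_mult: "Poly_Mapping.lookup (sc r * (y::FA)) w = r * Poly_Mapping.lookup y w"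
proof -
  have "sc r * y = sc r * (\<Sum>w\<in>Poly_Mapping.keys y. Poly_Mapping.single w (Poly_Mapping.lookup y w))"
    by (subst pm_expand[of y]) (rule refl)
  also have "\<dots> = (\<Sum>v\<in>Poly_Mapping.keys y. Poly_Mapping.single v (r * Poly_Mapping.lookup y v))"
    by (simp add: sum_distrib_left sc_single)
  finally have "Poly_Mapping.lookup (sc r * y) w = (\<Sum>v\<in>Poly_Mapping.keys y. r * Poly_Mapping.lookup y v when v = w)"
    by (simp add: lookup_sum lookup_single)
  also have "\<dots> = r * Poly_Mapping.lookup y w"
    by (cases "w \<in> Poly_Mapping.keys y") (auto simp: when_def in_keys_iff)
  finally show ?thesis .
qed

lemma sc_cancel: assumes "r \<noteq> 0" "sc r * (x::FA) = sc r * y" shows "x = y"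
proof (rule poly_mapping_eqI)
  fix w
  from assms(2) have "Poly_Mapping.lookup (sc r * x) w = Poly_Mapping.lookup (sc r * y) w" by simp
  then show "Poly_Mapping.lookup x w = Poly_Mapping.lookup y w"
    using assms(1) by (simp add: lookup_sc_mult)
qed

lemma rconst_mult: "rconst a * rconst b = rconst (a * b)"
  by (simp add: rconst_def mult_single)
lemma rconst_add: "rconst (a + b) = rconst a + rconst b"
  by (simp add: rconst_def single_add)
lemma rconst_one: "rconst 1 = 1" by (simp add: rconst_def)
lemma rconst_zero: "rconst 0 = 0" by (simp add: rconst_def)
lemma rconst_of_nat: "rconst (of_nat n) = of_nat n" by (simp add: rconst_def)
lemma single_neq0: "v \<noteq> 0 \<Longrightarrow> Poly_Mapping.single k v \<noteq> 0"
  by (metis lookup_single_eq lookup_zero)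
lemma rconst_neq0: "c \<noteq> 0 \<Longrightarrow> rconst c \<noteq> 0"
  by (simp add: rconst_def single_neq0)

lemma cst_mult: "cst a * cst b = cst (a * b)" by (simp add: cst_def sc_mult rconst_mult)
lemma cst_one: "cst 1 = 1" by (simp add: cst_def rconst_one sc_one)

lemma rvar_neq0: "rvar i \<noteq> 0"
  by (simp add: rvar_def single_neq0)
lemma hb_neq0: "hb \<noteq> 0" by (simp add: hb_def rvar_neq0)
lemma tt_neq0: "tt \<noteq> 0" by (simp add: tt_def rvar_neq0)
lemma hbtt_neq0: "hb + tt \<noteq> 0"
proof
  assume "hb + tt = 0"
  then have "Poly_Mapping.lookup (hb + tt) (Poly_Mapping.single 1 1) = 0" by simp
  moreover have "Poly_Mapping.single (2::nat) (1::nat) \<noteq> Poly_Mapping.single 1 1"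
    by (metis lookup_single_eq lookup_single_not_eq one_neq_zero numeral_One numeral_eq_iff semiring_norm(85))
  ultimately show False by (simp add: hb_def tt_def rvar_def lookup_add lookup_single when_def)
qed
definition TT :: R where "TT = tt * (hb + tt)"
lemma TT_neq0: "TT \<noteq> 0" by (simp add: TT_def tt_neq0 hbtt_neq0)

lemma rels_Yid: "x \<in> rels \<Longrightarrow> x \<in> Yid"
  unfolding Yid_def by blast
lemma Yid_I: "(\<And>I. two_sided_ideal I \<Longrightarrow> rels \<subseteq> I \<Longrightarrow> x \<in> I) \<Longrightarrow> x \<in> Yid"
  unfolding Yid_def by blast
lemma Yid_D: "x \<in> Yid \<Longrightarrow> two_sided_ideal I \<Longrightarrow> rels \<subseteq> I \<Longrightarrow> x \<in> I"
  unfolding Yid_def by blast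
lemma Yid_0: "0 \<in> Yid"
  by (rule Yid_I) (simp add: two_sided_ideal_def)
lemma Yid_add: "x \<in> Yid \<Longrightarrow> y \<in> Yid \<Longrightarrow> x + y \<in> Yid"
proof (rule Yid_I)
  fix I assume "x \<in> Yid" "y \<in> Yid" and I: "two_sided_ideal I" "rels \<subseteq> I"
  then have "x \<in> I" "y \<in> I" using Yid_D by auto
  with I(1) show "x + y \<in> I" unfolding two_sided_ideal_def by simp
qed
lemma Yid_uminus: "x \<in> Yid \<Longrightarrow> - x \<in> Yid"
proof (rule Yid_I)
  fix I assume "x \<in> Yid" and I: "two_sided_ideal I" "rels \<subseteq> I"
  then have "x \<in> I" using Yid_D by auto
  with I(1) show "- x \<in> I" unfolding two_sided_ideal_def by simp
qed
lemma Yid_lmult: "x \<in> Yid \<Longrightarrow> a * x \<in> Yid"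
proof (rule Yid_I)
  fix I assume "x \<in> Yid" and I: "two_sided_ideal I" "rels \<subseteq> I"
  then have "x \<in> I" using Yid_D by auto
  with I(1) show "a * x \<in> I" unfolding two_sided_ideal_def by simp
qed
lemma Yid_rmult: "x \<in> Yid \<Longrightarrow> x * a \<in> Yid"
proof (rule Yid_I)
  fix I assume "x \<in> Yid" and I: "two_sided_ideal I" "rels \<subseteq> I"
  then have "x \<in> I" using Yid_D by auto
  with I(1) show "x * a \<in> I" unfolding two_sided_ideal_def by simp
qed
lemma Yid_diff: "x \<in> Yid \<Longrightarrow> y \<in> Yid \<Longrightarrow> x - y \<in> Yid"
  using Yid_add[of x "- y"] Yid_uminus by simp
lemma Yid_sum: "(\<And>i. i \<in> A \<Longrightarrow> f i \<in> Yid) \<Longrightarrow> sum f A \<in> Yid"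
  by (induction A rule: infinite_finite_induct) (auto simp: Yid_0 Yid_add)

definition Cm :: "FA \<Rightarrow> FA \<Rightarrow> bool" where "Cm z y \<longleftrightarrow> comm z y \<in> Yid"

lemma Cm_add: "Cm z x \<Longrightarrow> Cm z y \<Longrightarrow> Cm z (x + y)"
  unfolding Cm_def comm_def by (drule (1) Yid_add) (simp add: algebra_simps)
lemma Cm_diff: "Cm z x \<Longrightarrow> Cm z y \<Longrightarrow> Cm z (x - y)"
  unfolding Cm_def comm_def by (drule (1) Yid_diff) (simp add: algebra_simps)
lemma Cm_uminus: "Cm z x \<Longrightarrow> Cm z (- x)"
  unfolding Cm_def comm_def by (drule Yid_uminus) (simp add: algebra_simps)
lemma Cm_mult: "Cm z x \<Longrightarrow> Cm z y \<Longrightarrow> Cm z (x * y)"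
proof -
  assume "Cm z x" "Cm z y"
  then have "(z * x - x * z) * y + x * (z * y - y * z) \<in> Yid"
    unfolding Cm_def comm_def by (rule Yid_add[OF Yid_rmult Yid_lmult])
  moreover have "(z * x - x * z) * y + x * (z * y - y * z) = z * (x * y) - (x * y) * z"
    by (simp add: left_diff_distrib right_diff_distrib mult.assoc)
  ultimately show ?thesis unfolding Cm_def comm_def by simp
qed
lemma Cm_sc: "Cm z (sc r)"
  unfolding Cm_def comm_def by (simp add: sc_comm Yid_0)
lemma Cm_scm: "Cm z y \<Longrightarrow> Cm z (sc r * y)"
  by (rule Cm_mult[OF Cm_sc])
lemma Cm_sum: "(\<And>i. i \<in> A \<Longrightarrow> Cm z (f i)) \<Longrightarrow> Cm z (sum f A)"
  by (induction A rule: infinite_finite_induct) (auto simp: Cm_add intro: Cm_sc[of z 0, simplified sc_zero])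
lemma Cm_Yid: "Cm z x \<Longrightarrow> x - y \<in> Yid \<Longrightarrow> Cm z y"
proof -
  assume a: "Cm z x" "x - y \<in> Yid"
  have "comm z x - (z * (x - y) - (x - y) * z) \<in> Yid"
    using a unfolding Cm_def comm_def by (intro Yid_diff[OF _ Yid_diff[OF Yid_lmult Yid_rmult]]) auto
  then show ?thesis unfolding Cm_def comm_def by (simp add: algebra_simps)
qed
lemma Cm_sym: "Cm z y \<Longrightarrow> Cm y z"
  unfolding Cm_def comm_def by (drule Yid_uminus) simp
lemma Cm_ladd: "Cm x z \<Longrightarrow> Cm y z \<Longrightarrow> Cm (x + y) z"
  using Cm_add Cm_sym by blast
lemma Cm_ldiff: "Cm x z \<Longrightarrow> Cm y z \<Longrightarrow> Cm (x - y) z"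
  using Cm_diff Cm_sym by blast
lemma Cm_gen_all: assumes "\<And>g. Cm z (gn g)" shows "Cm z y"
proof -
  have w: "Cm z (Poly_Mapping.single w 1)" for w
  proof (cases w)
    case (Word gs)
    show ?thesis unfolding Word
    proof (induction gs)
      case Nil then show ?case using Cm_sc[of z 1] by (simp add: sc_def zero_word_def)
    next
      case (Cons g gs)
      have "Poly_Mapping.single (Word (g # gs)) (1::R) = gn g * Poly_Mapping.single (Word gs) 1"
        by (simp add: gn_def mult_single)
      then show ?case using Cm_mult[OF assms Cons] by simp
    qed
  qed
  have "Cm z (\<Sum>w\<in>Poly_Mapping.keys y. sc (Poly_Mapping.lookup y w) * Poly_Mapping.single w 1)"
    by (intro Cm_sum Cm_scm w)
  then show ?thesis by (simp add: sc_single flip: pm_expand)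
qed



section \<open>Congruence mod Yid\<close>

definition eqv :: "FA \<Rightarrow> FA \<Rightarrow> bool" (infix "\<equiv>\<^sub>Y" 50) where "x \<equiv>\<^sub>Y y \<longleftrightarrow> x - y \<in> Yid"

lemma eqv_refl: "x \<equiv>\<^sub>Y x" by (simp add: eqv_def Yid_0)
lemma eqv_sym: "x \<equiv>\<^sub>Y y \<Longrightarrow> y \<equiv>\<^sub>Y x"
  unfolding eqv_def by (drule Yid_uminus) simp
lemma eqv_trans: "x \<equiv>\<^sub>Y y \<Longrightarrow> y \<equiv>\<^sub>Y z \<Longrightarrow> x \<equiv>\<^sub>Y z"
  unfolding eqv_def by (drule (1) Yid_add) simp
lemma eqv_add: "x \<equiv>\<^sub>Y y \<Longrightarrow> u \<equiv>\<^sub>Y v \<Longrightarrow> x + u \<equiv>\<^sub>Y y + v"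
  unfolding eqv_def by (drule (1) Yid_add) (simp add: algebra_simps)
lemma eqv_diff: "x \<equiv>\<^sub>Y y \<Longrightarrow> u \<equiv>\<^sub>Y v \<Longrightarrow> x - u \<equiv>\<^sub>Y y - v"
  unfolding eqv_def by (drule (1) Yid_diff) (simp add: algebra_simps)
lemma eqv_uminus: "x \<equiv>\<^sub>Y y \<Longrightarrow> - x \<equiv>\<^sub>Y - y"
  unfolding eqv_def by (drule Yid_uminus) (simp add: algebra_simps)
lemma eqv_lmult: "x \<equiv>\<^sub>Y y \<Longrightarrow> a * x \<equiv>\<^sub>Y a * y"
  unfolding eqv_def by (drule Yid_lmult[of _ a]) (simp add: right_diff_distrib)
lemma eqv_rmult: "x \<equiv>\<^sub>Y y \<Longrightarrow> x * a \<equiv>\<^sub>Y y * a"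
  unfolding eqv_def by (drule Yid_rmult[of _ a]) (simp add: left_diff_distrib)
lemma eqv_mult: "x \<equiv>\<^sub>Y y \<Longrightarrow> u \<equiv>\<^sub>Y v \<Longrightarrow> x * u \<equiv>\<^sub>Y y * v"
  by (meson eqv_lmult eqv_rmult eqv_trans)
lemma eqv_sum: "(\<And>i. i \<in> A \<Longrightarrow> f i \<equiv>\<^sub>Y g i) \<Longrightarrow> sum f A \<equiv>\<^sub>Y sum g A"
  by (induction A rule: infinite_finite_induct) (auto simp: eqv_refl eqv_add)
lemma eqv_eq: "x = y \<Longrightarrow> x \<equiv>\<^sub>Y y" by (simp add: eqv_refl)
lemma eqv_comm: "x \<equiv>\<^sub>Y y \<Longrightarrow> u \<equiv>\<^sub>Y v \<Longrightarrow> comm x u \<equiv>\<^sub>Y comm y v"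
  unfolding comm_def by (intro eqv_diff eqv_mult)
lemma Cm_eqv: "Cm z y \<longleftrightarrow> comm z y \<equiv>\<^sub>Y 0"
  by (simp add: Cm_def eqv_def)
lemma Cm_eqv_r: "Cm z y \<Longrightarrow> y \<equiv>\<^sub>Y y' \<Longrightarrow> Cm z y'"
  by (rule Cm_Yid) (simp_all add: eqv_def)
lemma rels_eqv: "x - y \<in> rels \<Longrightarrow> x \<equiv>\<^sub>Y y"
  by (simp add: eqv_def rels_Yid)

lemma comm_sum_l: "comm (sum f A) y = (\<Sum>i\<in>A. comm (f i) y)"
  by (simp add: comm_def sum_distrib_left sum_distrib_right sum_subtractf)
lemma comm_sum_r: "comm y (sum f A) = (\<Sum>i\<in>A. comm y (f i))"
  by (simp add: comm_def sum_distrib_left sum_distrib_right sum_subtractf)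
lemma comm_sc_l: "comm (sc r * x) y = sc r * comm x y"
proof -
  have "y * (sc r * x) = sc r * (y * x)" by (simp only: mult.assoc[symmetric] sc_comm[of r y, symmetric])
  then show ?thesis unfolding comm_def by (simp add: right_diff_distrib mult.assoc)
qed
lemma comm_sc_r: "comm x (sc r * y) = sc r * comm x y"
proof -
  have "x * (sc r * y) = sc r * (x * y)" by (simp only: mult.assoc[symmetric] sc_comm[of r x, symmetric])
  then show ?thesis unfolding comm_def by (simp add: right_diff_distrib mult.assoc)
qed
lemma cst_add: "cst (a + b) = cst a + cst b" by (simp add: cst_def rconst_add sc_add)
lemma cst_zero: "cst 0 = 0" by (simp add: cst_def rconst_zero sc_zero)
lemma cst_sum: "cst (sum f A) = (\<Sum>i\<in>A. cst (f i))"
  by (induction A rule: infinite_finite_induct) (auto simp: cst_zero cst_add)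

section \<open>Subalgebra generated by the D's\<close>

inductive_set Alg :: "nat \<Rightarrow> FA set" for j where
  Asc: "sc r \<in> Alg j"
| AD: "1 \<le> i \<Longrightarrow> i \<le> j \<Longrightarrow> D0 i \<in> Alg j"
| Aadd: "x \<in> Alg j \<Longrightarrow> y \<in> Alg j \<Longrightarrow> x + y \<in> Alg j"
| Amult: "x \<in> Alg j \<Longrightarrow> y \<in> Alg j \<Longrightarrow> x * y \<in> Alg j"

lemma Alg_Cm: assumes "\<And>i. 1 \<le> i \<Longrightarrow> i \<le> j \<Longrightarrow> Cm z (D0 i)" "x \<in> Alg j" shows "Cm z x"
  using assms(2) by (induction x rule: Alg.induct) (auto intro: Cm_sc Cm_add Cm_mult assms(1))
lemma Alg_mono: "x \<in> Alg j \<Longrightarrow> j \<le> j' \<Longrightarrow> x \<in> Alg j'"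
  by (induction x rule: Alg.induct) (auto intro: Alg.intros)
lemma Alg_0: "0 \<in> Alg j" using Alg.Asc[of 0 j] by (simp add: sc_zero)
lemma Alg_1: "1 \<in> Alg j" using Alg.Asc[of 1 j] by (simp add: sc_one)
lemma Alg_scm: "x \<in> Alg j \<Longrightarrow> sc r * x \<in> Alg j" by (rule Alg.Amult[OF Alg.Asc])
lemma Alg_uminus: "x \<in> Alg j \<Longrightarrow> - x \<in> Alg j"
  using Alg_scm[of x j "-1"] by (simp add: sc_uminus sc_one)
lemma Alg_diff: "x \<in> Alg j \<Longrightarrow> y \<in> Alg j \<Longrightarrow> x - y \<in> Alg j"
  using Alg.Aadd[OF _ Alg_uminus] by (simp add: )
lemma Alg_sum: "(\<And>i. i \<in> A \<Longrightarrow> f i \<in> Alg j) \<Longrightarrow> sum f A \<in> Alg j"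
  by (induction A rule: infinite_finite_induct) (auto simp: Alg_0 Alg.Aadd)
lemma Alg_pow: "x \<in> Alg j \<Longrightarrow> x ^ n \<in> Alg j"
  by (induction n) (auto simp: Alg_1 Alg.Amult)

lemma D_comm: "1 \<le> m \<Longrightarrow> 1 \<le> n \<Longrightarrow> Cm (D0 m) (D0 n)"
  unfolding Cm_def by (rule rels_Yid) (auto simp: rels_def)
lemma Alg_comm: assumes "x \<in> Alg j" "y \<in> Alg j'" shows "Cm x y"
proof -
  have "Cm (D0 i) y" if "1 \<le> i" for i
    using assms(2) by (rule Alg_Cm[rotated]) (auto intro: D_comm that)
  then have *: "Cm y (D0 i)" if "1 \<le> i" for i using Cm_sym that by blast
  have "Cm y x" by (rule Alg_Cm[OF _ assms(1)]) (simp add: *)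
  then show ?thesis by (rule Cm_sym)
qed



context
  fixes \<tau> :: "FA \<Rightarrow> FA"
  assumes tau: "Y_automorphism_lift \<tau>"
begin
lemma tau_all: "(\<forall>x y. \<tau> (x + y) = \<tau> x + \<tau> y) \<and> (\<forall>x y. \<tau> (x * y) = \<tau> x * \<tau> y)
   \<and> (\<forall>r. \<tau> (sc r) = sc r) \<and> (\<forall>x\<in>Yid. \<tau> x \<in> Yid)"
  using tau unfolding Y_automorphism_lift_def by (elim conjE) (intro conjI)
lemma tau_add: "\<tau> (x + y) = \<tau> x + \<tau> y" using tau_all by blast
lemma tau_mult: "\<tau> (x * y) = \<tau> x * \<tau> y" using tau_all by blast
lemma tau_sc: "\<tau> (sc r) = sc r" using tau_all by blast
lemma tau_Yid: "x \<in> Yid \<Longrightarrow> \<tau> x \<in> Yid" using tau_all by blast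
lemma tau_0: "\<tau> 0 = 0" using tau_sc[of 0] unfolding sc_zero .
lemma tau_uminus: "\<tau> (- x) = - \<tau> x"
proof -
  have "\<tau> x + \<tau> (- x) = 0" using tau_add[of x "- x"] tau_0 by simp
  then show ?thesis by (rule add.inverse_unique[symmetric])
qed
lemma tau_diff: "\<tau> (x - y) = \<tau> x - \<tau> y"
  unfolding diff_conv_add_uminus tau_add tau_uminus ..
lemma tau_comm: "\<tau> (comm x y) = comm (\<tau> x) (\<tau> y)"
  unfolding comm_def tau_diff tau_mult ..
lemma tau_eqv: "x \<equiv>\<^sub>Y y \<Longrightarrow> \<tau> x \<equiv>\<^sub>Y \<tau> y"
  unfolding eqv_def tau_diff[symmetric] by (rule tau_Yid)
lemma tau_scm: "\<tau> (sc r * x) = sc r * \<tau> x" unfolding tau_mult tau_sc ..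
lemma tau_sum: "\<tau> (sum f A) = (\<Sum>i\<in>A. \<tau> (f i))"
proof (induction A rule: infinite_finite_induct)
  case (infinite A) then show ?case by (simp add: tau_0)
next
  case empty then show ?case by (simp add: tau_0)
next
  case (insert x F) then show ?case by (simp add: tau_add)
qed
end

section \<open>Binomial convolution\<close>

lemma binom_conv:
  fixes L :: "nat \<Rightarrow> FA" and a :: complex
  shows "(\<Sum>k\<le>M. \<Sum>j\<le>n. cst (of_nat (M choose k) * a^(M-k)) * (cst (of_nat (n choose j) * a^(n-j)) * L (k+j)))
       = (\<Sum>l\<le>M+n. cst (of_nat ((M+n) choose l) * a^(M+n-l)) * L l)"
proof -
  define g where "g k j = cst (of_nat ((M choose k) * (n choose j)) * a^(M+n-(k+j))) * L (k+j)" for k j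
  have 1: "(\<Sum>k\<le>M. \<Sum>j\<le>n. cst (of_nat (M choose k) * a^(M-k)) * (cst (of_nat (n choose j) * a^(n-j)) * L (k+j)))
       = (\<Sum>k\<le>M. \<Sum>j\<le>n. g k j)"
  proof (intro sum.cong refl)
    fix k j assume "k \<in> {..M}" "j \<in> {..n}"
    then have "a^(M-k) * a^(n-j) = a^(M+n-(k+j))" by (simp add: power_add[symmetric])
    then have e1: "of_nat (M choose k) * a^(M-k) * (of_nat (n choose j) * a^(n-j))
       = (of_nat ((M choose k) * (n choose j)) * a^(M+n-(k+j)) :: complex)"
      by (simp add: algebra_simps)
    have e2: "cst (of_nat (M choose k) * a^(M-k)) * (cst (of_nat (n choose j) * a^(n-j)) * L (k+j))
       = cst (of_nat (M choose k) * a^(M-k) * (of_nat (n choose j) * a^(n-j))) * L (k+j)"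
      by (simp only: mult.assoc[symmetric] cst_mult)
    show "cst (of_nat (M choose k) * a^(M-k)) * (cst (of_nat (n choose j) * a^(n-j)) * L (k+j)) = g k j"
      unfolding g_def e2 e1 ..
  qed
  have 2: "(\<Sum>k\<le>M. \<Sum>j\<le>n. g k j) = (\<Sum>(k,j)\<in>{..M}\<times>{..n}. g k j)"
    by (simp add: sum.cartesian_product)
  have fin: "finite {(k,j). k+j \<le> M+n}"
    by (rule finite_subset[of _ "{..M+n}\<times>{..M+n}"]) auto
  have 3: "(\<Sum>(k,j)\<in>{..M}\<times>{..n}. g k j) = (\<Sum>(k,j)\<in>{(k,j). k+j \<le> M+n}. g k j)"
  proof (rule sum.mono_neutral_left[OF fin])
    show "{..M} \<times> {..n} \<subseteq> {(k,j). k+j \<le> M+n}" by auto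
    show "\<forall>i\<in>{(k,j). k+j \<le> M+n} - {..M} \<times> {..n}. (case i of (k, j) \<Rightarrow> g k j) = 0"
    proof
      fix i assume ii: "i \<in> {(k,j). k+j \<le> M+n} - {..M} \<times> {..n}"
      obtain k j where i: "i = (k,j)" by (cases i)
      with ii have "M < k \<or> n < j" by auto
      then have "(M choose k) * (n choose j) = 0" by auto
      then have z: "of_nat ((M choose k) * (n choose j)) = (0::complex)" by simp
      show "(case i of (k, j) \<Rightarrow> g k j) = 0"
        by (simp only: i g_def z case_prod_conv mult_zero_left cst_zero)
    qed
  qed
  have 4: "(\<Sum>(k,j)\<in>{(k,j). k+j \<le> M+n}. g k j) = (\<Sum>l\<le>M+n. \<Sum>k\<le>l. g k (l-k))"
    by (rule sum.triangle_reindex_eq)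
  have 5: "(\<Sum>k\<le>l. g k (l-k)) = cst (of_nat ((M+n) choose l) * a^(M+n-l)) * L l" for l
  proof -
    have "(\<Sum>k\<le>l. g k (l-k)) = (\<Sum>k\<le>l. cst (of_nat ((M choose k) * (n choose (l-k))) * a^(M+n-l))) * L l"
      by (simp add: g_def sum_distrib_right)
    also have "\<dots> = cst (of_nat (\<Sum>k\<le>l. (M choose k) * (n choose (l-k))) * a^(M+n-l)) * L l"
      by (simp add: cst_sum[symmetric] sum_distrib_right)
    finally show ?thesis by (simp add: vandermonde)
  qed
  show ?thesis using 1 2 3 4 5 by simp
qed



declare eqv_trans[trans]

definition Xm :: "complex \<Rightarrow> nat \<Rightarrow> FA" where
  "Xm a m = (\<Sum>k=1..m. cst (of_nat ((m - 1) choose (k - 1)) * a ^ (m - k)) * D0 k)"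
definition Bx :: "complex \<Rightarrow> (nat \<Rightarrow> FA) \<Rightarrow> nat \<Rightarrow> FA" where
  "Bx a G n = (\<Sum>k\<le>n. cst (of_nat (n choose k) * a ^ (n - k)) * G k)"

lemma comm_cst_l: "comm (cst c * x) y = cst c * comm x y" by (simp add: cst_def comm_sc_l)
lemma comm_cst_r: "comm x (cst c * y) = cst c * comm x y" by (simp add: cst_def comm_sc_r)
lemma sc_swap: "x * (sc s * y) = sc s * (x * y)"
  by (simp only: mult.assoc[symmetric] sc_comm[of s x, symmetric])
lemma Cm_cst: "Cm z y \<Longrightarrow> Cm z (cst c * y)" by (simp add: cst_def Cm_scm)
lemma comm_diff_l: "comm (x - y) z = comm x z - comm y z"
  by (simp add: comm_def left_diff_distrib right_diff_distrib)

lemma tri_ind: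
  assumes "\<And>n. Cm Z (\<tau> (G n))" "\<And>n. \<tau> (G n) \<equiv>\<^sub>Y Bx a G n"
  shows "Cm Z (G n)"
proof (induction n rule: less_induct)
  case (less n)
  have "Cm Z (Bx a G n)" using assms by (rule Cm_eqv_r)
  moreover have "Cm Z (\<Sum>k<n. cst (of_nat (n choose k) * a ^ (n - k)) * G k)"
    by (intro Cm_sum Cm_cst less) simp
  ultimately have "Cm Z (Bx a G n - (\<Sum>k<n. cst (of_nat (n choose k) * a ^ (n - k)) * G k))"
    by (rule Cm_diff)
  moreover have "Bx a G n = G n + (\<Sum>k<n. cst (of_nat (n choose k) * a ^ (n - k)) * G k)"
    unfolding Bx_def by (simp add: lessThan_Suc_atMost[symmetric] cst_one)
  ultimately show ?case by simp
qed

lemma gen_ef: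
  assumes tau: "Y_automorphism_lift \<tau>"
    and G: "\<And>m n. 1 \<le> m \<Longrightarrow> comm (D0 m) (G n) \<equiv>\<^sub>Y sc s * G (m + n - 1)"
    and tG: "\<And>n. \<tau> (G n) \<equiv>\<^sub>Y Bx a G n"
    and m: "1 \<le> m"
  shows "Cm (\<tau> (D0 m) - Xm a m) (G n)"
proof (rule tri_ind[of _ \<tau>, OF _ tG])
  fix n
  obtain M where M: "m = Suc M" using m by (cases m) auto
  have A: "comm (\<tau> (D0 m)) (\<tau> (G n)) \<equiv>\<^sub>Y sc s * Bx a G (m + n - 1)"
  proof -
    have "comm (\<tau> (D0 m)) (\<tau> (G n)) = \<tau> (comm (D0 m) (G n))" by (simp add: tau_comm[OF tau])
    also have "\<dots> \<equiv>\<^sub>Y \<tau> (sc s * G (m + n - 1))" by (rule tau_eqv[OF tau G[OF m]])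
    also have "\<tau> (sc s * G (m + n - 1)) = sc s * \<tau> (G (m + n - 1))" by (rule tau_scm[OF tau])
    finally show ?thesis using eqv_lmult[OF tG] eqv_trans by blast
  qed
  have B: "comm (Xm a m) (\<tau> (G n)) \<equiv>\<^sub>Y sc s * Bx a G (m + n - 1)"
  proof -
    have "comm (Xm a m) (\<tau> (G n)) \<equiv>\<^sub>Y comm (Xm a m) (Bx a G n)" by (rule eqv_comm[OF eqv_refl tG])
    also have "comm (Xm a m) (Bx a G n) = (\<Sum>k=1..m. \<Sum>j\<le>n. cst (of_nat ((m - 1) choose (k - 1)) * a ^ (m - k))
        * (cst (of_nat (n choose j) * a ^ (n - j)) * comm (D0 k) (G j)))"
      unfolding Xm_def comm_sum_l comm_cst_l unfolding Bx_def comm_sum_r comm_cst_r sum_distrib_left ..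
    also have "\<dots> \<equiv>\<^sub>Y (\<Sum>k=1..m. \<Sum>j\<le>n. cst (of_nat ((m - 1) choose (k - 1)) * a ^ (m - k))
        * (cst (of_nat (n choose j) * a ^ (n - j)) * (sc s * G (k + j - 1))))"
      by (intro eqv_sum eqv_lmult G) simp
    also have "\<dots> = sc s * (\<Sum>k=1..m. \<Sum>j\<le>n. cst (of_nat ((m - 1) choose (k - 1)) * a ^ (m - k))
        * (cst (of_nat (n choose j) * a ^ (n - j)) * G (k + j - 1)))"
      by (simp add: sum_distrib_left sc_swap)
    also have "(\<Sum>k=1..m. \<Sum>j\<le>n. cst (of_nat ((m - 1) choose (k - 1)) * a ^ (m - k))
        * (cst (of_nat (n choose j) * a ^ (n - j)) * G (k + j - 1)))
      = (\<Sum>k\<le>M. \<Sum>j\<le>n. cst (of_nat (M choose k) * a^(M-k)) * (cst (of_nat (n choose j) * a^(n-j)) * G (k+j)))"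
      unfolding M by (simp only: One_nat_def sum.shift_bounds_cl_Suc_ivl atLeast0AtMost) simp
    also have "\<dots> = Bx a G (m + n - 1)" unfolding binom_conv Bx_def M by simp
    finally show ?thesis .
  qed
  have "comm (\<tau> (D0 m) - Xm a m) (\<tau> (G n)) \<equiv>\<^sub>Y sc s * Bx a G (m + n - 1) - sc s * Bx a G (m + n - 1)"
    unfolding comm_diff_l by (rule eqv_diff[OF A B])
  then show "Cm (\<tau> (D0 m) - Xm a m) (\<tau> (G n))" by (simp add: Cm_eqv)
qed



lemma odd_sum_div:
  fixes u v :: "'a::comm_ring_1"
  assumes "odd p" shows "\<exists>h. u ^ p + v ^ p = (u + v) * h"
proof -
  have "u ^ p - (- v) ^ p = (u - (- v)) * (\<Sum>i<p. (- v) ^ (p - Suc i) * u ^ i)"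
    by (rule power_diff_sumr2)
  then show ?thesis using assms by (auto simp: power_minus_odd)
qed

lemma odd_F_div:
  fixes u v :: "'a::comm_ring_1"
  shows "\<exists>g. (u + v) ^ (2 * i + 1) - u ^ (2 * i + 1) - v ^ (2 * i + 1) = u * v * (u + v) * g"
proof (induction i)
  case 0 then show ?case by (intro exI[of _ 0]) simp
next
  case (Suc i)
  define p where "p = 2 * i + 1"
  from Suc obtain g where g: "(u + v) ^ p - u ^ p - v ^ p = u * v * (u + v) * g" unfolding p_def by blast
  obtain h1 where h1: "u ^ p + v ^ p = (u + v) * h1" using odd_sum_div[of p u v] unfolding p_def by auto
  have "\<exists>h2. v * u ^ (p - 1) + u * v ^ (p - 1) = (u + v) * h2"
  proof (cases i)
    case 0 then show ?thesis unfolding p_def by (intro exI[of _ 1]) (simp add: add.commute)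
  next
    case (Suc i')
    then have pp: "p - 1 = Suc (2 * i' + 1)" unfolding p_def by simp
    obtain h where h: "u ^ (2 * i' + 1) + v ^ (2 * i' + 1) = (u + v) * h" using odd_sum_div[of "2 * i' + 1" u v] by auto
    have "v * u ^ (p - 1) + u * v ^ (p - 1) = u * v * (u ^ (2 * i' + 1) + v ^ (2 * i' + 1))"
      unfolding pp by (simp add: algebra_simps)
    also have "\<dots> = (u + v) * (u * v * h)" unfolding h by (simp add: algebra_simps)
    finally show ?thesis by blast
  qed
  then obtain h2 where h2: "v * u ^ (p - 1) + u * v ^ (p - 1) = (u + v) * h2" by blast
  have pS: "2 * Suc i + 1 = Suc (Suc p)" unfolding p_def by simp
  have p1: "p = Suc (p - 1)" unfolding p_def by simp
  have "(u + v) ^ Suc (Suc p) - u ^ Suc (Suc p) - v ^ Suc (Suc p)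
      = (u + v)^2 * ((u + v) ^ p - u ^ p - v ^ p) + u * v * (2 * (u ^ p + v ^ p) + (v * u ^ (p - 1) + u * v ^ (p - 1)))"
  proof -
    have a: "u ^ p = u * u ^ (p - 1)" "v ^ p = v * v ^ (p - 1)" by (subst p1; simp)+
    show ?thesis by (simp add: algebra_simps power2_eq_square a)
  qed
  also have "\<dots> = u * v * (u + v) * ((u + v)^2 * g + 2 * h1 + h2)"
    unfolding g h1 h2 by (simp add: algebra_simps)
  finally show ?case unfolding pS by blast
qed

lemma odd_F_div':
  fixes u v :: "'a::comm_ring_1"
  assumes "odd j" shows "\<exists>g. (u + v) ^ j - u ^ j - v ^ j = u * v * (u + v) * g"
proof -
  obtain i where "j = 2 * i + 1" using assms oddE by blast
  then show ?thesis using odd_F_div by blast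
qed


definition kap :: "nat \<Rightarrow> nat \<Rightarrow> R" where
  "kap n j = (if j = 0 then 0 else if n = 0 then rconst (1 / of_nat j)
     else rconst (of_nat ((n + j - 1) choose j) / of_nat n))"
lemma gcoef_kap: "gcoef n u j = kap n j * u ^ j" by (simp add: gcoef_def kap_def)

definition brk :: "nat \<Rightarrow> R" where
  "brk j = ((- hb) ^ j - hb ^ j) + ((hb + tt) ^ j - (- (hb + tt)) ^ j) + ((- tt) ^ j - tt ^ j)"

lemma phic_eq: "n \<le> k \<Longrightarrow> phic n k = kap n (k - n) * brk (k - n)"
  by (simp add: phic_def gcoef_kap brk_def algebra_simps)
lemma phic_lt: "k < n \<Longrightarrow> phic n k = 0" by (simp add: phic_def)

lemma brk_even: assumes "even j" shows "brk j = 0"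
  unfolding brk_def power_minus_even[OF assms] by simp
lemma brk_odd: assumes "odd j" shows "brk j = 2 * ((hb + tt) ^ j - hb ^ j - tt ^ j)"
  unfolding brk_def power_minus_odd[OF assms] by (simp add: algebra_simps)

lemma phic_div: "\<exists>r. phic n k = hb * (TT * r)"
proof (cases "n \<le> k")
  case False then show ?thesis by (intro exI[of _ 0]) (simp add: phic_lt)
next
  case True
  show ?thesis
  proof (cases "even (k - n)")
    case True with \<open>n \<le> k\<close> show ?thesis by (intro exI[of _ 0]) (simp add: phic_eq brk_even)
  next
    case False
    then obtain g where g: "(hb + tt) ^ (k - n) - hb ^ (k - n) - tt ^ (k - n) = hb * tt * (hb + tt) * g"
      using odd_F_div'[of "k - n" hb tt] by blast
    have "phic n k = kap n (k - n) * (2 * ((hb + tt) ^ (k - n) - hb ^ (k - n) - tt ^ (k - n)))"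
      using \<open>n \<le> k\<close> False by (simp add: phic_eq brk_odd)
    also have "\<dots> = kap n (k - n) * (2 * (hb * tt * (hb + tt) * g))" by (simp only: g)
    also have "\<dots> = hb * (TT * (2 * kap n (k - n) * g))" by (simp add: TT_def algebra_simps)
    finally have "phic n k = hb * (TT * (2 * kap n (k - n) * g))" .
    then show ?thesis by blast
  qed
qed

lemma phic_small: "k < n + 3 \<Longrightarrow> phic n k = 0"
proof (cases "n \<le> k")
  case False then show "phic n k = 0" by (simp add: phic_lt)
next
  case True
  assume "k < n + 3"
  then have "k - n = 0 \<or> k - n = 1 \<or> k - n = 2" by auto
  then show "phic n k = 0"
  proof (elim disjE)
    assume "k - n = 0" then show ?thesis using True by (simp add: phic_eq kap_def)
  next
    assume "k - n = 1" then show ?thesis using True by (simp add: phic_eq brk_def algebra_simps)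
  next
    assume "k - n = 2" then show ?thesis using True by (simp add: phic_eq brk_even)
  qed
qed

definition kc :: "nat \<Rightarrow> complex" where
  "kc n = (if n = 0 then 1 / 3 else of_nat ((n + 2) choose 3) / of_nat n)"
lemma kc_neq0: "kc n \<noteq> 0"
  by (auto simp: kc_def)

lemma phic_3: "phic n (n + 3) = hb * (TT * rconst (6 * kc n))"
proof -
  have k: "kap n 3 = rconst (kc n)" by (simp add: kap_def kc_def)
  have b: "brk 3 = 6 * (hb * tt * (hb + tt))"
    by (simp add: brk_odd power3_eq_cube algebra_simps)
  have r0: "rconst 6 = 6" by (simp add: rconst_def)
  have r6: "rconst (6 * kc n) = 6 * rconst (kc n)"
    using rconst_mult[of 6 "kc n"] r0 by simp
  show ?thesis unfolding r6 by (simp add: phic_eq k b TT_def algebra_simps)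
qed

definition rho :: "nat \<Rightarrow> nat \<Rightarrow> R" where
  "rho n k = (SOME r. phic n k = hb * (TT * r))"
lemma rho: "phic n k = hb * (TT * rho n k)"
  unfolding rho_def using phic_div[of n k] by (rule someI_ex)
lemma rho_small: "k < n + 3 \<Longrightarrow> rho n k = 0"
  using rho[of n k] phic_small[of k n] hb_neq0 TT_neq0 by simp
lemma rho_3: "rho n (n + 3) = rconst (6 * kc n)"
  using rho[of n "n + 3"] phic_3[of n] hb_neq0 TT_neq0 by simp
lemma rdiv_phic: "rdiv (phic n k) hb = TT * rho n k"
  unfolding rdiv_def
proof (rule the_equality)
  show "TT * rho n k * hb = phic n k" by (simp add: rho mult_ac)
next
  fix r assume "r * hb = phic n k"
  then have "r * hb = (TT * rho n k) * hb" by (simp add: rho mult_ac)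
  then show "r = TT * rho n k" using hb_neq0 by simp
qed



definition Sp :: "FA fps" where
  "Sp = Abs_fps (\<lambda>k. - (\<Sum>n\<le>k. sc (rho n k) * D0 (n + 1)))"

lemma Sser_nth: "(fps_nth Sser k) = sc TT * (fps_nth Sp k)"
  unfolding Sser_def Sp_def fps_nth_Abs_fps rdiv_phic sc_mult[symmetric] mult.assoc
    sum_distrib_left[symmetric] mult_minus_right ..

lemma Sser_pow_nth: "(fps_nth (Sser ^ j) N) = sc (TT ^ j) * (fps_nth (Sp ^ j) N)"
proof (induction j arbitrary: N)
  case 0 then show ?case unfolding power_0 sc_one fps_one_nth by simp
next
  case (Suc j)
  have "(fps_nth (Sser ^ Suc j) N) = (\<Sum>i=0..N. (fps_nth Sser i) * (fps_nth (Sser ^ j) (N - i)))"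
    unfolding power_Suc fps_mult_nth ..
  also have "\<dots> = (\<Sum>i=0..N. sc (TT ^ Suc j) * ((fps_nth Sp i) * (fps_nth (Sp ^ j) (N - i))))"
  proof (rule sum.cong[OF refl])
    fix i
    have "(fps_nth Sser i) * (fps_nth (Sser ^ j) (N - i)) = sc TT * ((fps_nth Sp i) * (sc (TT ^ j) * (fps_nth (Sp ^ j) (N - i))))"
      by (simp only: Suc.IH Sser_nth mult.assoc)
    also have "\<dots> = sc TT * (sc (TT ^ j) * ((fps_nth Sp i) * (fps_nth (Sp ^ j) (N - i))))" by (simp only: sc_swap[of "fps_nth Sp i"])
    also have "\<dots> = sc (TT ^ Suc j) * ((fps_nth Sp i) * (fps_nth (Sp ^ j) (N - i)))"
      by (simp only: mult.assoc[symmetric] sc_mult power_Suc)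
    finally show "(fps_nth Sser i) * (fps_nth (Sser ^ j) (N - i)) = sc (TT ^ Suc j) * ((fps_nth Sp i) * (fps_nth (Sp ^ j) (N - i)))" .
  qed
  also have "\<dots> = sc (TT ^ Suc j) * (fps_nth (Sp ^ Suc j) N)"
    unfolding power_Suc[of Sp] fps_mult_nth sum_distrib_left ..
  finally show ?case .
qed

definition Ep :: "nat \<Rightarrow> FA" where
  "Ep N = (\<Sum>j\<in>{1..N}. sc (rconst (1 / fact j) * TT ^ (j - 1)) * (fps_nth (Sp ^ j) N))"

lemma Ec_0: "Ec 0 = 1"
  by (simp add: Ec_def rconst_one sc_one)

lemma Ec_pos: assumes "1 \<le> N" shows "Ec N = sc TT * Ep N"
proof -
  have "{..N} = insert 0 {1..N}" by auto
  then have "Ec N = sc (rconst (1 / fact 0)) * (fps_nth (Sser ^ 0) N)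
      + (\<Sum>j\<in>{1..N}. sc (rconst (1 / fact j)) * (fps_nth (Sser ^ j) N))"
    unfolding Ec_def by simp
  also have "sc (rconst (1 / fact 0)) * (fps_nth (Sser ^ 0) N) = 0" using assms by simp
  also have "(\<Sum>j\<in>{1..N}. sc (rconst (1 / fact j)) * (fps_nth (Sser ^ j) N)) = sc TT * Ep N"
    unfolding Ep_def sum_distrib_left
  proof (rule sum.cong[OF refl])
    fix j assume "j \<in> {1..N}"
    then have "TT ^ j = TT * TT ^ (j - 1)" by (cases j) auto
    then show "sc (rconst (1 / fact j)) * (fps_nth (Sser ^ j) N) = sc TT * (sc (rconst (1 / fact j) * TT ^ (j - 1)) * (fps_nth (Sp ^ j) N))"
      by (simp only: Sser_pow_nth mult.assoc[symmetric] sc_mult) (simp add: \<open>TT ^ j = TT * TT ^ (j - 1)\<close> mult_ac)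
  qed
  finally show ?thesis by simp
qed

lemma Pc_0: "Pc 0 = 1" by (simp add: Pc_def numc_def)

lemma Pc_pos: assumes "1 \<le> i" shows "\<exists>p. Pc i = TT * p"
proof -
  define s where "s = hb + (1 - om) * tt"
  have n1: "numc 1 = - s" by (simp add: numc_def s_def algebra_simps)
  have Pc_eq: "Pc i = (\<Sum>k\<in>{..min i 2}. numc k * s ^ (i - k))"
    unfolding Pc_def s_def[symmetric]
    by (rule sum.mono_neutral_right) (auto simp: numc_def)
  show ?thesis
  proof (cases "i = 1")
    case True
    have n0: "numc 0 = 1" by (simp add: numc_def)
    have n1': "numc (Suc 0) = - s" using n1 by simp
    from True have "Pc i = 0" unfolding Pc_eq by (simp add: n1' n0)
    then show ?thesis by (intro exI[of _ 0]) simp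
  next
    case False
    with assms obtain i' where i: "i = Suc (Suc i')" by (cases i; cases "i - 1") auto
    have "{..min i 2} = {0, 1, 2}" unfolding i by auto
    then have "Pc i = s ^ i + numc 1 * s ^ (i - 1) + numc 2 * s ^ (i - 2)"
      unfolding Pc_eq by (simp add: numc_def)
    also have "\<dots> = numc 2 * s ^ i'" unfolding n1 i by (simp add: algebra_simps)
    also have "\<dots> = TT * (- (om * s ^ i'))" by (simp add: numc_def TT_def algebra_simps)
    finally show ?thesis by blast
  qed
qed

definition pp :: "nat \<Rightarrow> R" where "pp i = (SOME p. Pc i = TT * p)"
lemma pp: "1 \<le> i \<Longrightarrow> Pc i = TT * pp i"
  unfolding pp_def by (rule someI_ex) (rule Pc_pos)

definition Hx :: "nat \<Rightarrow> FA" where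
  "Hx n = - (Ep (n + 1) + (\<Sum>i\<in>{1..n+1}. sc (pp i) * Ec (n + 1 - i)))"

lemma RHSc_pos: assumes "1 \<le> N"
  shows "RHSc N = sc TT * (Ep N + (\<Sum>i\<in>{1..N}. sc (pp i) * Ec (N - i)))"
proof -
  have "{..N} = insert 0 {1..N}" by auto
  then have "RHSc N = sc (Pc 0) * Ec N + (\<Sum>i\<in>{1..N}. sc (Pc i) * Ec (N - i))"
    unfolding RHSc_def by simp
  also have "(\<Sum>i\<in>{1..N}. sc (Pc i) * Ec (N - i)) = sc TT * (\<Sum>i\<in>{1..N}. sc (pp i) * Ec (N - i))"
    unfolding sum_distrib_left by (rule sum.cong) (auto simp: pp sc_mult[symmetric] mult.assoc)
  finally show ?thesis using assms by (simp add: Pc_0 sc_one Ec_pos distrib_left)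
qed

lemma hh_eq: "hh n = Hx n"
proof -
  have R: "RHSc (n + 1) = sc TT * (Ep (n + 1) + (\<Sum>i\<in>{1..n+1}. sc (pp i) * Ec (n + 1 - i)))"
    by (rule RHSc_pos) simp
  have H: "sc TT * Hx n = - RHSc (n + 1)"
    unfolding R Hx_def by (rule mult_minus_right)
  show ?thesis
    unfolding hh_def TT_def[symmetric]
  proof (rule the_equality)
    show "sc TT * Hx n = - RHSc (n + 1)" by (rule H)
  next
    fix y assume "sc TT * y = - RHSc (n + 1)"
    then have "sc TT * y = sc TT * Hx n" unfolding H .
    then show "y = Hx n" using TT_neq0 by (rule sc_cancel[rotated])
  qed
qed



lemma Alg_pow_nth1:
  assumes "\<And>i. i \<le> M \<Longrightarrow> fps_nth f i \<in> Alg J" "b \<le> M"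
  shows "fps_nth (f ^ j) b \<in> Alg J"
  using assms(2)
proof (induction j arbitrary: b)
  case 0 then show ?case by (simp add: Alg_0 Alg_1)
next
  case (Suc j)
  have "fps_nth (f ^ Suc j) b = (\<Sum>i=0..b. fps_nth f i * fps_nth (f ^ j) (b - i))"
    unfolding power_Suc fps_mult_nth ..
  also have "\<dots> \<in> Alg J"
    using Suc by (intro Alg_sum Alg.Amult assms(1)) auto
  finally show ?case .
qed

lemma Alg_pow_nth2:
  assumes "fps_nth f 0 = 0" "\<And>i. i < N \<Longrightarrow> fps_nth f i \<in> Alg J" "2 \<le> j"
  shows "fps_nth (f ^ j) N \<in> Alg J"
proof -
  obtain j' where j: "j = Suc j'" "1 \<le> j'" using assms(3) by (cases j) auto
  have z: "fps_nth (f ^ j') 0 = 0" using j(2) assms(1) by (simp add: fps_nth_power_0 zero_power)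
  have "fps_nth (f ^ j) N = (\<Sum>i=0..N. fps_nth f i * fps_nth (f ^ j') (N - i))"
    unfolding j power_Suc fps_mult_nth ..
  also have "\<dots> \<in> Alg J"
  proof (intro Alg_sum)
    fix i assume "i \<in> {0..N}"
    show "fps_nth f i * fps_nth (f ^ j') (N - i) \<in> Alg J"
    proof (cases "i = 0 \<or> i = N")
      case True then show ?thesis using assms(1) z by (auto simp: Alg_0)
    next
      case False
      then have "i < N" "N - i < N" using \<open>i \<in> {0..N}\<close> by auto
      then show ?thesis
        by (intro Alg.Amult assms(2) Alg_pow_nth1[of "N - 1"]) auto
    qed
  qed
  finally show ?thesis .
qed

lemma Sp_Alg: assumes "i \<le> J + 2" shows "fps_nth Sp i \<in> Alg J"
proof -
  have "sc (rho n i) * D0 (n + 1) \<in> Alg J" if "n \<le> i" for n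
  proof (cases "i < n + 3")
    case True then show ?thesis by (simp add: rho_small sc_zero Alg_0)
  next
    case False then show ?thesis using assms by (intro Alg_scm Alg.AD) auto
  qed
  then show ?thesis unfolding Sp_def fps_nth_Abs_fps by (intro Alg_uminus Alg_sum) auto
qed

lemma Sser_Alg: "i \<le> J + 2 \<Longrightarrow> fps_nth Sser i \<in> Alg J"
  unfolding Sser_nth by (intro Alg_scm Sp_Alg)

lemma Ec_Alg: assumes "i \<le> J + 2" shows "Ec i \<in> Alg J"
  unfolding Ec_def
  by (intro Alg_sum Alg_scm Alg_pow_nth1[of i]) (use assms Sser_Alg in auto)

lemma Ep_Alg: assumes "i \<le> J + 2" shows "Ep i \<in> Alg J"
  unfolding Ep_def
  by (intro Alg_sum Alg_scm Alg_pow_nth1[of i]) (use assms Sp_Alg in auto)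

lemma hh_Alg: "hh n \<in> Alg (n + 1)"
  unfolding hh_eq Hx_def
  by (intro Alg_uminus Alg.Aadd Ep_Alg Alg_sum Alg_scm Ec_Alg) auto

lemma Sp_0: "fps_nth Sp 0 = 0"
  by (simp add: Sp_def rho_small sc_zero)

lemma hh_lead: assumes k: "1 \<le> k"
  shows "hh (k + 1) - sc (rconst (6 * kc (k - 1))) * D0 k \<in> Alg (k - 1)"
proof -
  define J where "J = k - 1"
  define c where "c = sc (rconst (6 * kc (k - 1)))"
  have kJ: "k = J + 1" using k unfolding J_def by simp
  define R where "R = (\<Sum>n\<in>{..k+2} - {k - 1}. sc (rho n (k + 2)) * D0 (n + 1))"
  have R: "R \<in> Alg J"
    unfolding R_def
  proof (intro Alg_sum)
    fix n assume n: "n \<in> {..k+2} - {k - 1}"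
    show "sc (rho n (k + 2)) * D0 (n + 1) \<in> Alg J"
    proof (cases "k \<le> n")
      case True then have "k + 2 < n + 3" by simp
      then show ?thesis by (simp add: rho_small sc_zero Alg_0)
    next
      case False with n have "n + 1 \<le> J" unfolding J_def by auto
      then show ?thesis by (intro Alg_scm Alg.AD) auto
    qed
  qed
  have Spk: "fps_nth Sp (k + 2) = - (c * D0 k + R)"
  proof -
    have "(\<Sum>n\<le>k+2. sc (rho n (k + 2)) * D0 (n + 1))
        = sc (rho (k - 1) (k + 2)) * D0 (k - 1 + 1) + R"
      unfolding R_def by (rule sum.remove) auto
    moreover have "rho (k - 1) (k + 2) = rconst (6 * kc (k - 1))"
      using rho_3[of "k - 1"] k by simp
    moreover have "k - 1 + 1 = k" using k by simp
    ultimately show ?thesis unfolding Sp_def c_def by simp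
  qed
  define W2 where "W2 = (\<Sum>j\<in>{2..k+2}. sc (rconst (1 / fact j) * TT ^ (j - 1)) * fps_nth (Sp ^ j) (k + 2))"
  have W2: "W2 \<in> Alg J"
    unfolding W2_def
    by (intro Alg_sum Alg_scm Alg_pow_nth2[OF Sp_0]) (auto simp: kJ intro: Sp_Alg)
  have Ep: "Ep (k + 2) = fps_nth Sp (k + 2) + W2"
  proof -
    have "{1..k+2} = insert 1 {2..k+2}" by auto
    then show ?thesis unfolding Ep_def W2_def by (simp add: rconst_one sc_one)
  qed
  define W3 where "W3 = (\<Sum>i\<in>{1..k+2}. sc (pp i) * Ec (k + 2 - i))"
  have W3: "W3 \<in> Alg J"
    unfolding W3_def by (intro Alg_sum Alg_scm Ec_Alg) (auto simp: kJ)
  have "hh (k + 1) = - (Ep (k + 2) + W3)"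
    unfolding hh_eq Hx_def W3_def by simp
  also have "\<dots> = c * D0 k + R - W2 - W3"
    unfolding Ep Spk by (simp add: algebra_simps)
  finally have "hh (k + 1) - c * D0 k = R - W2 - W3" by simp
  also have "\<dots> \<in> Alg J" using R W2 W3 by (intro Alg_diff)
  finally show ?thesis unfolding c_def J_def .
qed



theorem lemma6p7:
  fixes a :: complex and \<tau> :: "FA \<Rightarrow> FA"
  assumes "Y_automorphism_lift \<tau>"
    and "\<And>n. \<tau> (ee n) - (\<Sum>k\<le>n. cst (of_nat (n choose k) * a ^ (n - k)) * ee k) \<in> Yid"
    and "\<And>n. \<tau> (ff n) - (\<Sum>k\<le>n. cst (of_nat (n choose k) * a ^ (n - k)) * ff k) \<in> Yid"
    and "\<And>n. \<tau> (hh n) - (\<Sum>k\<le>n. cst (of_nat (n choose k) * a ^ (n - k)) * hh k) \<in> Yid"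
  shows "\<forall>m\<ge>1. Ycentral (\<tau> (D0 m) - (\<Sum>k=1..m. cst (of_nat ((m - 1) choose (k - 1)) * a ^ (m - k)) * D0 k))"
proof (intro allI impI)
  fix m :: nat assume m: "1 \<le> m"
  note tau = assms(1)
  define Z where "Z = \<tau> (D0 m) - Xm a m"
  have tE: "\<tau> (ee n) \<equiv>\<^sub>Y Bx a ee n" for n using assms(2) by (simp add: eqv_def Bx_def)
  have tF: "\<tau> (ff n) \<equiv>\<^sub>Y Bx a ff n" for n using assms(3) by (simp add: eqv_def Bx_def)
  have tH: "\<tau> (hh n) \<equiv>\<^sub>Y Bx a hh n" for n using assms(4) by (simp add: eqv_def Bx_def)
  have E: "comm (D0 m') (ee n) \<equiv>\<^sub>Y sc (- hb) * ee (m' + n - 1)" if "1 \<le> m'" for m' n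
  proof -
    have "comm (D0 m') (ee n) - sc (- hb) * ee (m' + n - 1) = comm (D0 m') (ee n) + sc hb * ee (m' + n - 1)"
      by (simp add: sc_uminus)
    also have "\<dots> \<in> rels" unfolding rels_def using that by blast
    finally show ?thesis by (rule rels_eqv)
  qed
  have F: "comm (D0 m') (ff n) \<equiv>\<^sub>Y sc hb * ff (m' + n - 1)" if "1 \<le> m'" for m' n
    by (rule rels_eqv) (unfold rels_def, use that in blast)
  have CE: "Cm Z (ee n)" for n unfolding Z_def by (rule gen_ef[OF tau E tE m])
  have CF: "Cm Z (ff n)" for n unfolding Z_def by (rule gen_ef[OF tau F tF m])
  have DmA: "D0 m \<in> Alg m" using m by (rule Alg.AD) simp
  have XA: "Xm a m \<in> Alg m"
    unfolding Xm_def cst_def by (intro Alg_sum Alg_scm Alg.AD) auto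
  have CH: "Cm Z (hh j)" for j
  proof -
    have "Cm (\<tau> (D0 m)) (\<tau> (hh n))" for n
    proof -
      have "comm (D0 m) (hh n) \<in> Yid" using Alg_comm[OF DmA hh_Alg] unfolding Cm_def .
      then have "\<tau> (comm (D0 m) (hh n)) \<in> Yid" by (rule tau_Yid[OF tau])
      then show ?thesis unfolding Cm_def tau_comm[OF tau] .
    qed
    then have "Cm (\<tau> (D0 m)) (hh j)" by (rule tri_ind[OF _ tH])
    moreover have "Cm (Xm a m) (hh j)" by (rule Alg_comm[OF XA hh_Alg])
    ultimately show ?thesis unfolding Z_def by (rule Cm_ldiff)
  qed
  have CD: "1 \<le> k \<Longrightarrow> Cm Z (D0 k)" for k
  proof (induction k rule: less_induct)
    case (less k)
    define c where "c = 6 * kc (k - 1)"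
    have c0: "c \<noteq> 0" unfolding c_def using kc_neq0 by simp
    have AC: "Cm Z w" if "w \<in> Alg (k - 1)" for w
      using that by (rule Alg_Cm[rotated]) (intro less.IH; simp)
    have "Cm Z (hh (k + 1) - sc (rconst c) * D0 k)" unfolding c_def by (rule AC[OF hh_lead[OF less.prems]])
    then have "Cm Z (hh (k + 1) - (hh (k + 1) - sc (rconst c) * D0 k))" by (rule Cm_diff[OF CH])
    then have "Cm Z (sc (rconst c) * D0 k)" by simp
    then have "Cm Z (sc (rconst (1 / c)) * (sc (rconst c) * D0 k))" by (rule Cm_scm)
    moreover have "sc (rconst (1 / c)) * (sc (rconst c) * D0 k) = D0 k"
      by (simp only: mult.assoc[symmetric] sc_mult rconst_mult) (simp add: c0 rconst_one sc_one)
    ultimately show ?case by simp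
  qed
  have "Cm Z (gn g)" for g
  proof (cases g)
    case (DG i)
    have "gn g = D0 (i + 1)" by (simp add: DG D0_def)
    then show ?thesis using CD by simp
  next
    case (EG n) then show ?thesis using CE by (simp add: ee_def)
  next
    case (FG n) then show ?thesis using CF by (simp add: ff_def)
  qed
  then have "Cm Z y" for y by (rule Cm_gen_all)
  then show "Ycentral (\<tau> (D0 m) - (\<Sum>k=1..m. cst (of_nat ((m - 1) choose (k - 1)) * a ^ (m - k)) * D0 k))"
    unfolding Ycentral_def Z_def Xm_def Cm_def comm_def by blast
qed

end
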